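(* Let $p$ be an odd prime and let $r\in\{2,3,\dots,p-1\}$ be a primitive root modulo $p$. (1) If $p\equiv1\pmod4$, then at least one of $r$ and $p-r$ is a primitive root modulo $p^2$. (2) If $p\equiv3\pmod4$, let $s\in\{1,\dots,p-1\}$ be the integer with $s\equiv -r^2\pmod p$. Then at least one of $r$ and $s$ is a primitive root modulo $p^2$.
   Context: An integer $r$ is a primitive root modulo $m$ if $\gcd(r,m)=1$ and the multiplicative order of $r$ modulo $m$ equals $\varphi(m)$, where $\varphi$ is Euler's totient function. *)

theory Defs
  imports "HOL-Number_Theory.Number_Theory"
begin

end

theory Submission imports Defs begin

lemma ord_int: "[int x ^ d = 1] (mod int p) \<longleftrightarrow> ord p x dvd d"
  by (metis cong_int_iff of_nat_1 of_nat_power ord_divides)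

lemma binom_lin:
  fixes a t p :: int
  shows "\<exists>X. (a + p*t)^Suc n = a^Suc n + int (Suc n)*p*t*a^n + p^2*X"
proof (induction n)
  case 0
  then show ?case by (rule exI[of _ 0]) simp
next
  case (Suc n)
  then obtain X where X: "(a + p*t)^Suc n = a^Suc n + int (Suc n)*p*t*a^n + p^2*X" by blast
  have "(a + p*t)^Suc (Suc n) = (a + p*t) * (a^Suc n + int (Suc n)*p*t*a^n + p^2*X)"
    by (metis X power_Suc)
  also have "\<dots> = a^Suc (Suc n) + int (Suc (Suc n))*p*t*a^(Suc n) + p^2*(X*a + int (Suc n)*t^2*a^n + p*t*X)"
    by (simp add: algebra_simps power2_eq_square)
  finally show ?case by blast
qed

lemma lift:
  assumes "prime p" "odd p" "residue_primroot p g" "\<not> residue_primroot (p^2) g"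
  shows "int p^2 dvd int g^(p-1) - 1"
proof -
  have "[g ^ (p - 1) = 1] (mod p\<^sup>2)"
  proof (rule ccontr)
    assume "\<not> [g ^ (p - 1) = 1] (mod p\<^sup>2)"
    then have "\<forall>k>0. residue_primroot (p ^ k) g"
      using residue_primroot_prime_lift_iff[OF assms(1,2,3)] by blast
    then show False using assms(4) by auto
  qed
  then have "[int g ^ (p - 1) = 1] (mod int p^2)"
    by (metis cong_int_iff of_nat_1 of_nat_power)
  then show ?thesis by (simp add: cong_iff_dvd_diff)
qed

lemma neg_primroot:
  assumes p: "prime p" and pm: "[p = 1] (mod 4)" and r: "residue_primroot p r" and rp: "r < p"
  shows "residue_primroot p (p - r)"
proof -
  have p1: "p > 1" using p prime_gt_1_nat by blast
  have cop: "coprime p r" and ordr: "ord p r = p - 1"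
    using r p by (auto simp: residue_primroot_def totient_prime)
  have cong: "[int (p - r) = - int r] (mod int p)"
    using rp by (simp add: cong_iff_dvd_diff of_nat_diff)
  have cop2: "coprime p (p - r)"
    using cop rp by (metis coprime_commute coprime_diff_one_left_nat diff_diff_cancel gcd_diff2_nat less_imp_le_nat coprime_iff_gcd_eq_1 gcd.commute)
  define k where "k = ord p (p - r)"
  have kpos: "k > 0" using cop2 by (simp add: k_def)
  have kdvd: "k dvd p - 1"
    using order_divides_totient[OF cop2] p by (simp add: k_def totient_prime)
  have "[int (p - r) ^ k = 1] (mod int p)" by (simp add: ord_int k_def)
  then have A: "[(- int r) ^ k = 1] (mod int p)"
    by (meson cong cong_pow cong_sym cong_trans)
  then have "[((- int r) ^ k)^2 = 1] (mod int p)"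
    by (metis cong_pow power_one)
  then have "[int r ^ (2*k) = 1] (mod int p)"
    by (simp add: power_mult[symmetric] mult.commute)
  then have "p - 1 dvd 2 * k" using ordr by (simp add: ord_int)
  then obtain c where c: "2 * k = (p - 1) * c" by blast
  obtain d where d: "p - 1 = k * d" using kdvd by blast
  have "2 * k = k * d * c" using c d by simp
  then have "d * c = 2" using kpos by simp
  then have "d dvd 2" by (metis dvd_triv_left)
  then have "d \<le> 2" "d \<noteq> 0" by (auto dest: dvd_imp_le intro: gr0I)
  then have "d = 1 \<or> d = 2" by linarith
  moreover have "d \<noteq> 2"
  proof
    assume "d = 2"
    then have pk: "p - 1 = 2 * k" using d by simp
    have "4 dvd p - 1" using pm p1 by (metis cong_to_1_nat)
    then have "even k" using pk by presburger
    then have "[int r ^ k = 1] (mod int p)" using A by (simp add: power_minus_even)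
    then have "p - 1 dvd k" using ordr by (simp add: ord_int)
    then show False using pk kpos by (simp add: nat_dvd_not_less)
  qed
  ultimately have "k = p - 1" using d by simp
  then show ?thesis using cop2 p1 p by (simp add: residue_primroot_def k_def totient_prime)
qed

lemma s_primroot:
  assumes p: "prime p" and pm: "[p = 3] (mod 4)" and r: "residue_primroot p r"
    and s: "[int s = - ((int r)^2)] (mod (int p))"
  shows "residue_primroot p s"
proof -
  have p1: "p > 1" using p prime_gt_1_nat by blast
  have cop: "coprime p r" and ordr: "ord p r = p - 1"
    using r p by (auto simp: residue_primroot_def totient_prime)
  have cop2: "coprime p s"
  proof (rule ccontr)
    assume "\<not> coprime p s"
    then have "p dvd s" using p by (metis prime_imp_coprime)
    then have "int p dvd int s" by simp
    moreover have "int p dvd int s + (int r)^2" using s by (simp add: cong_iff_dvd_diff)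
    ultimately have "int p dvd (int r)^2" by (simp add: dvd_add_right_iff)
    then have "p dvd r^2" by (metis of_nat_dvd_iff of_nat_power)
    then have "p dvd r" using p prime_dvd_power by blast
    then show False using cop p1 by (metis coprime_common_divisor_nat dvd_refl less_irrefl)
  qed
  define k where "k = ord p s"
  have kpos: "k > 0" using cop2 by (simp add: k_def)
  have kdvd: "k dvd p - 1"
    using order_divides_totient[OF cop2] p by (simp add: k_def totient_prime)
  have "[int s ^ k = 1] (mod int p)" by (simp add: ord_int k_def)
  then have A: "[(- ((int r)^2)) ^ k = 1] (mod int p)"
    by (meson s cong_pow cong_sym cong_trans)
  then have "[((- ((int r)^2)) ^ k)^2 = 1] (mod int p)"
    by (metis cong_pow power_one)
  then have "[int r ^ (4*k) = 1] (mod int p)"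
  proof -
    have "((- ((int r)^2)) ^ k)^2 = int r ^ (4*k)"
      by (simp add: power_mult[symmetric] power_mult_distrib algebra_simps)
    then show ?thesis using \<open>[((- ((int r)^2)) ^ k)^2 = 1] (mod int p)\<close> by simp
  qed
  then have "p - 1 dvd 4 * k" using ordr by (simp add: ord_int)
  obtain m where m: "p - 1 = 2 * m" "odd m"
  proof -
    have "p mod 4 = 3" using pm by (simp add: cong_def)
    then have "p - 1 = 2*((p-1) div 2)" "odd ((p-1) div 2)" by presburger+
    then show ?thesis using that by blast
  qed
  have "2 * m dvd 2 * (2 * k)" using \<open>p - 1 dvd 4 * k\<close> m by simp
  then have "m dvd 2 * k" by (metis nat_mult_dvd_cancel_disj zero_neq_numeral)
  moreover have "coprime m 2" using m(2) by simp
  ultimately have "m dvd k" by (metis coprime_dvd_mult_right_iff)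
  then obtain c where c: "k = m * c" by blast
  obtain d where d: "p - 1 = k * d" using kdvd by blast
  have m0: "m > 0" using m p1 by (intro gr0I) simp
  have "m * c * d = m * 2" using c d m by simp
  then have "c * d = 2" using m0 by simp
  then have "c dvd 2" by (metis dvd_triv_left)
  then have "c \<le> 2" "c \<noteq> 0" by (auto dest: dvd_imp_le intro: gr0I)
  then have "c = 1 \<or> c = 2" by linarith
  moreover have "c \<noteq> 1"
  proof
    assume "c = 1"
    then have km: "k = m" using c by simp
    have "[int r ^ (p - 1) = 1] (mod int p)" using ordr by (simp add: ord_int)
    moreover have "(- ((int r)^2)) ^ k = - (int r ^ (p - 1))"
      using km m by (simp add: power_mult[symmetric] power_minus_odd)
    ultimately have B: "[- (int r ^ (p - 1)) = - 1] (mod int p)" "[- (int r ^ (p - 1)) = 1] (mod int p)"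
      using A by (simp_all add: cong_minus_minus_iff)
    have "[- 1 = (1::int)] (mod int p)" using cong_trans[OF cong_sym[OF B(1)] B(2)] .
    then have "int p dvd 2" by (simp add: cong_iff_dvd_diff)
    then have "p dvd 2" by (metis of_nat_dvd_iff of_nat_numeral)
    then have "p \<le> 2" by (simp add: dvd_imp_le)
    moreover have "p mod 4 = 3" using pm by (simp add: cong_def)
    ultimately show False by presburger
  qed
  ultimately have "k = p - 1" using c m by simp
  then show ?thesis using cop2 p1 p by (simp add: residue_primroot_def k_def totient_prime)
qed

lemma prime_not_dvd_pred: "prime (p::nat) \<Longrightarrow> \<not> int p dvd int p - 1"
proof
  assume a: "prime p" "int p dvd int p - 1"
  then have "int p dvd int p - (int p - 1)" using dvd_diff dvd_refl by blast
  then have "int p dvd 1" by simp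
  then have "p dvd 1" by (metis of_nat_1 of_nat_dvd_iff)
  then show False using a(1) by simp
qed

theorem mainTheorem12:
  fixes p r :: nat
  assumes "prime p" and "odd p"
    and "2 \<le> r" and "r \<le> p - 1"
    and "residue_primroot p r"
  shows "([p = 1] (mod 4) \<longrightarrow>
           residue_primroot (p^2) r \<or> residue_primroot (p^2) (p - r))
       \<and> ([p = 3] (mod 4) \<longrightarrow>
           (\<forall>s::nat. 1 \<le> s \<and> s \<le> p - 1 \<and> [int s = - ((int r)^2)] (mod (int p)) \<longrightarrow>
              residue_primroot (p^2) r \<or> residue_primroot (p^2) s))"
proof -
  note p = assms(1) and podd = assms(2) and r = assms(5)
  have p1: "p > 1" using p prime_gt_1_nat by blast
  have p3: "p \<ge> 3" using p1 podd by presburger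
  have rp: "r < p" using assms(4) p1 by linarith
  have cop: "coprime p r" using r by (simp add: residue_primroot_def)
  have pip: "prime (int p)" using p by simp
  have npr: "\<not> int p dvd int r"
  proof
    assume "int p dvd int r"
    then have "p dvd r" by simp
    then show False using cop p1 by (metis coprime_common_divisor_nat dvd_refl less_irrefl)
  qed
  have npm: "\<not> int p dvd int p - 1" using prime_not_dvd_pred[OF p] .
  obtain n where n: "p - 1 = Suc n" using p1 by (metis Suc_diff_1 less_imp_diff_less diff_less zero_less_one not0_implies_Suc diff_is_0_eq' less_numeral_extra(4) not_less)
  have ev: "even (p - 1)" using podd p1 by simp
  have nodd: "odd n" using ev n by presburger
  have Rr: "residue_primroot (p^2) r" if "\<not> residue_primroot (p^2) r \<Longrightarrow> False" for dummy::bool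
    using that by blast
  show ?thesis
  proof (intro conjI impI allI)
    assume pm: "[p = 1] (mod 4)"
    show "residue_primroot (p^2) r \<or> residue_primroot (p^2) (p - r)"
    proof (rule ccontr)
      assume "\<not> ?thesis"
      then have h1: "\<not> residue_primroot (p^2) r" and h2: "\<not> residue_primroot (p^2) (p - r)" by auto
      have d1: "int p^2 dvd int r^(p-1) - 1" using lift[OF p podd r h1] .
      have d2: "int p^2 dvd int (p - r)^(p-1) - 1" using lift[OF p podd neg_primroot[OF p pm r rp] h2] .
      obtain X where X: "(- int r + int p * 1)^Suc n = (- int r)^Suc n + int (Suc n) * int p * 1 * (- int r)^n + int p^2 * X"
        using binom_lin by blast
      have e1: "int (p - r) = - int r + int p * 1" using rp by simp
      have e2: "(- int r)^Suc n = int r ^ (p - 1)" using ev n by (metis power_minus_even)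
      have "int (p - r)^(p-1) - 1 - (int r^(p-1) - 1) - int p^2 * X = int (Suc n) * int p * (- int r)^n"
        using X e1 e2 n by simp
      moreover have "int p^2 dvd int (p - r)^(p-1) - 1 - (int r^(p-1) - 1) - int p^2 * X"
        by (rule dvd_diff[OF dvd_diff[OF d2 d1]]) simp
      ultimately have "int p * int p dvd int p * (int (Suc n) * (- int r)^n)"
        by (simp add: power2_eq_square algebra_simps)
      then have "int p dvd int (Suc n) * (- int r)^n" using p1 by simp
      then have "int p dvd int (Suc n) \<or> int p dvd (- int r)^n"
        using pip prime_dvd_mult_iff by blast
      moreover have "int (Suc n) = int p - 1" using n p1 by (metis of_nat_1 of_nat_diff less_imp_le)
      ultimately show False using npm npr pip prime_dvd_power by (metis dvd_minus_iff)
    qed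
  next
    fix s :: nat
    assume pm: "[p = 3] (mod 4)" and hs: "1 \<le> s \<and> s \<le> p - 1 \<and> [int s = - ((int r)^2)] (mod (int p))"
    then have sc: "[int s = - ((int r)^2)] (mod (int p))" by blast
    show "residue_primroot (p^2) r \<or> residue_primroot (p^2) s"
    proof (rule ccontr)
      assume "\<not> ?thesis"
      then have h1: "\<not> residue_primroot (p^2) r" and h2: "\<not> residue_primroot (p^2) s" by auto
      have d1: "int p^2 dvd int r^(p-1) - 1" using lift[OF p podd r h1] .
      have d2: "int p^2 dvd int s^(p-1) - 1" using lift[OF p podd s_primroot[OF p pm r sc] h2] .
      have "int p dvd int s + (int r)^2" using sc by (simp add: cong_iff_dvd_diff)
      then obtain t where t: "int s + (int r)^2 = int p * t" by blast
      obtain X where X: "(- ((int r)^2) + int p * t)^Suc n = (- ((int r)^2))^Suc n + int (Suc n) * int p * t * (- ((int r)^2))^n + int p^2 * X"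
        using binom_lin by blast
      have e1: "int s = - ((int r)^2) + int p * t" using t by simp
      have e2: "(- ((int r)^2))^Suc n = (int r ^ (p - 1))^2" using ev n
        by (metis power_minus_even power_mult power_mult_distrib mult.commute)
      have d3: "int p^2 dvd (int r ^ (p - 1))^2 - 1"
      proof -
        have "(int r ^ (p - 1))^2 - 1 = (int r ^ (p - 1) - 1) * (int r ^ (p - 1) + 1)"
          by (simp add: algebra_simps power2_eq_square)
        then show ?thesis using d1 by simp
      qed
      have "int s^(p-1) - 1 - ((int r ^ (p - 1))^2 - 1) - int p^2 * X = int (Suc n) * int p * t * (- ((int r)^2))^n"
        using X e1 e2 n by simp
      moreover have "int p^2 dvd int s^(p-1) - 1 - ((int r ^ (p - 1))^2 - 1) - int p^2 * X"
        by (rule dvd_diff[OF dvd_diff[OF d2 d3]]) simp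
      ultimately have "int p * int p dvd int p * (int (Suc n) * t * (- ((int r)^2))^n)"
        by (simp add: power2_eq_square algebra_simps)
      then have "int p dvd int (Suc n) * t * (- ((int r)^2))^n" using p1 by simp
      then have "int p dvd int (Suc n) \<or> int p dvd t \<or> int p dvd (- ((int r)^2))^n"
        using pip prime_dvd_mult_iff by blast
      moreover have "int (Suc n) = int p - 1" using n p1 by (metis of_nat_1 of_nat_diff less_imp_le)
      moreover have "\<not> int p dvd (- ((int r)^2))^n"
        using npr pip prime_dvd_power by (metis dvd_minus_iff)
      ultimately have "int p dvd t" using npm by metis
      then have "int p * int p dvd int s + (int r)^2" using t by simp
      moreover have "int s + (int r)^2 > 0" using hs by (simp add: add_pos_nonneg)
      ultimately have "int p * int p \<le> int s + (int r)^2" by (simp add: zdvd_imp_le)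
      moreover have "int s \<le> int p - 1" "int r \<le> int p - 1" using hs assms(4) p1 by auto
      then have "(int r)^2 \<le> (int p - 1)^2" using assms(3) by (intro power_mono) auto
      ultimately show False using \<open>int s \<le> int p - 1\<close> p1 by (simp add: power2_eq_square algebra_simps)
    qed
  qed
qed

end
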